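(* For every $\rho \in \mathcal{S}$ and $\sigma \in \mathcal{P}$, $D^{\mathbb{P}}(\rho\|\sigma) = D^{\mathbb{M}}(\rho\|\sigma)$.
   Context: Work on a $d$-dimensional complex Hilbert space. $\mathcal{P}$ denotes the positive semidefinite operators, $\mathcal{S}$ the density operators; $\log$ is the natural logarithm. For a probability measure $P$ and a positive measure $Q$ on a finite set $\mathcal{X}$, the Kullback–Leibler divergence is $D(P\|Q)=\sum_x P(x)\log\frac{P(x)}{Q(x)}$ (terms with $P(x)=0$ are $0$), and $D(P\|Q)=+\infty$ if $P$ is not absolutely continuous w.r.t. $Q$. A POVM on a finite set $\mathcal{X}$ is a map $M$ from $\mathcal{X}$ to positive semidefinite operators with $\sum_x M(x)=1$; it induces the measure $P_{\rho,M}(x)=\operatorname{tr}[M(x)\rho]$. The measured relative entropy is $D^{\mathbb{M}}(\rho\|\sigma):=\sup_{(\mathcal{X},M)} D(P_{\rho,M}\|P_{\sigma,M})$, supremum over all finite sets $\mathcal{X}$ and POVMs $M$ on $\mathcal{X}$. The projectively measured relative entropy is \[ D^{\mathbb{P}}(\rho\|\sigma) := \sup_{ \{ P_i \}_{i=1}^d} \sum_{i=1}^d \operatorname{tr} [P_i \rho] \log \frac{\operatorname{tr} [P_i \rho]}{\operatorname{tr} [P_i \sigma]}, \] supremum over families of $d$ mutually orthogonal rank-one projectors (same conventions for $0$ and $\infty$). *)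

theory Defs
  imports "HOL-Analysis.Analysis"
begin

text \<open>Operators on a d-dimensional complex Hilbert space: d = CARD('n),
  operators are complex d x d matrices of type complex^'n^'n.\<close>

definition adjoint :: "complex^'n^'n \<Rightarrow> complex^'n^'n" where
  "adjoint A = (\<chi> i j. cnj (A $ j $ i))"

definition hermitian :: "complex^'n^'n \<Rightarrow> bool" where
  "hermitian A \<longleftrightarrow> adjoint A = A"

definition quad_form :: "complex^'n^'n \<Rightarrow> complex^'n \<Rightarrow> complex" where
  "quad_form A v = (\<Sum>i\<in>UNIV. cnj (v $ i) * (A *v v) $ i)"

definition psd :: "complex^'n^'n \<Rightarrow> bool" where
  "psd A \<longleftrightarrow> hermitian A \<and> (\<forall>v. 0 \<le> Re (quad_form A v))"

definition density_operator :: "complex^'n^'n \<Rightarrow> bool" where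
  "density_operator \<rho> \<longleftrightarrow> psd \<rho> \<and> trace \<rho> = 1"

definition KL :: "'x set \<Rightarrow> ('x \<Rightarrow> real) \<Rightarrow> ('x \<Rightarrow> real) \<Rightarrow> ereal" where
  "KL X P Q =
     (if \<exists>x\<in>X. P x \<noteq> 0 \<and> Q x = 0 then \<infinity>
      else ereal (\<Sum>x\<in>X. if P x = 0 then 0 else P x * ln (P x / Q x)))"

text \<open>POVM on a finite set X (finite sets are represented, w.l.o.g., as finite
  sets of natural numbers).\<close>
definition povm :: "'x set \<Rightarrow> ('x \<Rightarrow> complex^'n^'n) \<Rightarrow> bool" where
  "povm X M \<longleftrightarrow> finite X \<and> (\<forall>x\<in>X. psd (M x)) \<and> (\<Sum>x\<in>X. M x) = mat 1"

definition meas :: "('x \<Rightarrow> complex^'n^'n) \<Rightarrow> complex^'n^'n \<Rightarrow> 'x \<Rightarrow> real" where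
  "meas M \<rho> x = Re (trace (M x ** \<rho>))"

definition measured_rel_entropy :: "complex^'n^'n \<Rightarrow> complex^'n^'n \<Rightarrow> ereal" where
  "measured_rel_entropy \<rho> \<sigma> =
     (SUP XM \<in> {(X :: nat set, M). povm X M}.
        KL (fst XM) (meas (snd XM) \<rho>) (meas (snd XM) \<sigma>))"

definition rank_one_projector :: "complex^'n^'n \<Rightarrow> bool" where
  "rank_one_projector P \<longleftrightarrow> P ** P = P \<and> adjoint P = P \<and> rank P = 1"

definition orth_rank_one_family :: "('n \<Rightarrow> complex^'n^'n) \<Rightarrow> bool" where
  "orth_rank_one_family P \<longleftrightarrow>
     (\<forall>i. rank_one_projector (P i)) \<and> (\<forall>i j. i \<noteq> j \<longrightarrow> P i ** P j = 0)"

definition proj_measured_rel_entropy :: "complex^'n^'n \<Rightarrow> complex^'n^'n \<Rightarrow> ereal" where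
  "proj_measured_rel_entropy \<rho> \<sigma> =
     (SUP P \<in> {P :: 'n \<Rightarrow> complex^'n^'n. orth_rank_one_family P}.
        KL UNIV (meas P \<rho>) (meas P \<sigma>))"

end

theory Submission
  imports Defs
begin

definition cinner :: "complex^'n \<Rightarrow> complex^'n \<Rightarrow> complex" where
  "cinner u v = (\<Sum>i\<in>UNIV. cnj (u$i) * v$i)"

definition outer :: "complex^'n \<Rightarrow> complex^'n^'n" where
  "outer e = (\<chi> i j. e$i * cnj (e$j))"

lemma quad_form_cinner: "quad_form A v = cinner v (A *v v)"
  by (simp add: quad_form_def cinner_def)

lemma cinner_add_right: "cinner u (v + w) = cinner u v + cinner u w"
  by (simp add: cinner_def distrib_left sum.distrib)
lemma cinner_add_left: "cinner (u + v) w = cinner u w + cinner v w"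
  by (simp add: cinner_def distrib_right sum.distrib)
lemma cinner_diff_right: "cinner u (v - w) = cinner u v - cinner u w"
  by (simp add: cinner_def right_diff_distrib sum_subtractf)
lemma cinner_diff_left: "cinner (u - v) w = cinner u w - cinner v w"
  by (simp add: cinner_def left_diff_distrib sum_subtractf)
lemma cinner_scale_right: "cinner u (c *s v) = c * cinner u v"
  by (simp add: cinner_def sum_distrib_left algebra_simps)
lemma cinner_scale_left: "cinner (c *s u) v = cnj c * cinner u v"
  by (simp add: cinner_def sum_distrib_left algebra_simps)
lemma cinner_zero_right[simp]: "cinner u 0 = 0"
  by (simp add: cinner_def)
lemma cinner_zero_left[simp]: "cinner 0 u = 0"
  by (simp add: cinner_def)
lemma cinner_sum_right: "cinner u (sum f S) = (\<Sum>x\<in>S. cinner u (f x))"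
  unfolding cinner_def by (simp add: sum_distrib_left sum_component) (rule sum.swap)
lemma cinner_sum_left: "cinner (sum f S) u = (\<Sum>x\<in>S. cinner (f x) u)"
  unfolding cinner_def by (simp add: sum_distrib_right sum_component) (rule sum.swap)
lemma cinner_cnj: "cnj (cinner u v) = cinner v u"
  by (simp add: cinner_def mult.commute)
lemma cnj_mult_self: "cnj z * z = of_real ((cmod z)^2)"
  by (metis complex_norm_square mult.commute of_real_power)
lemma cinner_self: "cinner v v = of_real (\<Sum>i\<in>UNIV. (cmod (v$i))^2)"
  unfolding cinner_def cnj_mult_self of_real_sum by simp
lemma cinner_self_Re: "Re (cinner v v) = (\<Sum>i\<in>UNIV. (cmod (v$i))^2)"
  by (simp add: cinner_self)
lemma cinner_self_Im: "Im (cinner v v) = 0"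
  by (simp add: cinner_self)
lemma cinner_self_nonneg: "0 \<le> Re (cinner v v)"
  by (simp add: cinner_self_Re sum_nonneg)
lemma cinner_self_eq_0: "cinner v v = 0 \<longleftrightarrow> v = 0"
proof
  assume "cinner v v = 0"
  hence "(\<Sum>i\<in>UNIV. (cmod (v$i))^2) = 0" using cinner_self[of v] of_real_eq_0_iff by metis
  hence "\<forall>i\<in>UNIV. (cmod (v$i))^2 = 0" by (subst (asm) sum_nonneg_eq_0_iff) auto
  thus "v = 0" by (simp add: vec_eq_iff)
qed simp

lemma cinner_matrix: "cinner u (A *v v) = cinner (adjoint A *v u) v"
  unfolding cinner_def adjoint_def matrix_vector_mult_def
  by (simp add: sum_distrib_left sum_distrib_right algebra_simps) (rule sum.swap)

lemma hermitian_cinner: "hermitian A \<Longrightarrow> cinner u (A *v v) = cinner (A *v u) v"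
  by (metis cinner_matrix hermitian_def)

lemma hermitian_quad_real: "hermitian A \<Longrightarrow> Im (cinner v (A *v v)) = 0"
  by (metis cinner_cnj hermitian_cinner Reals_cnj_iff complex_is_Real_iff)

lemma outer_mult: "outer e *v v = cinner e v *s e"
  by (simp add: outer_def cinner_def matrix_vector_mult_def vec_eq_iff sum_distrib_left algebra_simps)

lemma trace_outer: "trace (outer e ** A) = cinner e (A *v e)"
  unfolding trace_def outer_def cinner_def matrix_matrix_mult_def matrix_vector_mult_def
  by (simp add: sum_distrib_left algebra_simps) (rule sum.swap)

lemma norm_sq_cinner: "(norm v)^2 = Re (cinner v v)"
  by (simp add: norm_vec_def L2_set_def cinner_self_Re sum_nonneg)

lemma cinner_cont: "continuous_on S (\<lambda>v. cinner u v)"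
  unfolding cinner_def by (intro continuous_intros)

lemma cinner_self_cont: "continuous_on S (\<lambda>v. Re (cinner v v))"
  unfolding cinner_def by (intro continuous_intros)

lemma quad_cont: "continuous_on S (\<lambda>v. Re (cinner v (A *v v)))"
  unfolding cinner_def matrix_vector_mult_def by (intro continuous_intros)

lemma scale_mult_right: "(A::complex^'n^'n) *v (c *s v) = c *s (A *v v)"
  by (auto simp: vec_eq_iff matrix_vector_mult_def sum_distrib_left algebra_simps intro!: sum.cong)

lemma cinner_i_Re: "Re (cinner (\<i> *s z) y) = Im (cinner z y)"
  by (simp add: cinner_scale_left)

lemma real_quad_zero:
  fixes a c :: real
  assumes "\<And>r. 2*r*a \<le> r^2 * c" "c \<ge> 0"
  shows "a = 0"
proof -
  define r where "r = a/(c+1)"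
  have "2*r*a \<le> r^2*c" by (rule assms(1))
  hence "(c+1)^2 * (2*r*a) \<le> (c+1)^2 * (r^2*c)" by (rule mult_left_mono) simp
  moreover have c1: "c + 1 \<noteq> 0" "1 + c \<noteq> 0" using assms(2) by auto
  moreover have "(c+1)^2 * (2*r*a) = 2*a*a*(c+1)" using c1
    by (simp add: r_def power2_eq_square field_simps)
  moreover have "(c+1)^2 * (r^2*c) = a*a*c" using c1
    by (simp add: r_def power_divide power2_eq_square)
  ultimately have "2*a*a*(c+1) \<le> a*a*c" by simp
  hence "a*a*(c+2) \<le> 0" by (simp add: algebra_simps)
  moreover have "a*a \<ge> 0" by simp
  ultimately have "a*a = 0" using assms(2)
    by (metis add_nonneg_pos le_less_linear mult_pos_pos not_less order_antisym zero_less_numeral mult_le_0_iff)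
  thus ?thesis by simp
qed

definition onb :: "('n \<Rightarrow> complex^'n) \<Rightarrow> bool" where
  "onb e \<longleftrightarrow> (\<forall>i j. cinner (e i) (e j) = (if i = j then 1 else 0))"

definition orthonormal :: "(complex^'n) set \<Rightarrow> bool" where
  "orthonormal S \<longleftrightarrow> (\<forall>u\<in>S. \<forall>v\<in>S. cinner u v = (if u = v then 1 else 0))"

definition eigs :: "complex^'n^'n \<Rightarrow> (complex^'n) set" where
  "eigs A = {s. \<exists>c::real. A *v s = of_real c *s s}"

lemma orthonormal_independent:
  assumes "orthonormal S" "finite S"
  shows "vec.independent S"
proof -
  { fix c assume h: "(\<Sum>v\<in>S. c v *s v) = 0"
    have "\<forall>v\<in>S. c v = 0"
    proof
      fix v assume v: "v \<in> S"
      have "0 = cinner v (\<Sum>w\<in>S. c w *s w)" using h by simp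
      also have "... = (\<Sum>w\<in>S. c w * cinner v w)" by (simp add: cinner_sum_right cinner_scale_right)
      also have "... = (\<Sum>w\<in>S. if v = w then c w else 0)"
        using assms(1) v unfolding orthonormal_def by (intro sum.cong) auto
      also have "... = c v" using v assms(2) by simp
      finally show "c v = 0" by simp
    qed }
  thus ?thesis using assms(2) by (simp add: vec.independent_explicit)
qed

lemma orth_complement_exists:
  assumes "orthonormal S" "finite S" "card S < CARD('n)"
  shows "\<exists>w::complex^'n. w \<noteq> 0 \<and> (\<forall>s\<in>S. cinner s w = 0)"
proof -
  have "vec.span S \<noteq> UNIV"
  proof
    assume "vec.span S = UNIV"
    hence "vec.dim (vec.span S) = CARD('n)" using vec_dim_card by simp
    moreover have "vec.dim (vec.span S) = card S"
      using vec.dim_span_eq_card_independent orthonormal_independent assms by blast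
    ultimately show False using assms(3) by simp
  qed
  then obtain v where v: "v \<notin> vec.span S" by auto
  define w where "w = v - (\<Sum>s\<in>S. cinner s v *s s)"
  have "w \<noteq> 0"
  proof
    assume "w = 0"
    hence "v = (\<Sum>s\<in>S. cinner s v *s s)" unfolding w_def by (metis right_minus_eq)
    moreover have "(\<Sum>s\<in>S. cinner s v *s s) \<in> vec.span S"
      by (rule vec.span_sum) (auto intro: vec.span_scale vec.span_base)
    ultimately show False using v by metis
  qed
  moreover have "\<forall>s\<in>S. cinner s w = 0"
  proof
    fix s assume s: "s \<in> S"
    have "cinner s (\<Sum>t\<in>S. cinner t v *s t) = (\<Sum>t\<in>S. cinner t v * cinner s t)"
      by (simp add: cinner_sum_right cinner_scale_right)
    also have "... = (\<Sum>t\<in>S. if s = t then cinner t v else 0)"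
      using assms(1) s unfolding orthonormal_def by (intro sum.cong) auto
    also have "... = cinner s v" using s assms(2) by simp
    finally show "cinner s w = 0" by (simp add: w_def cinner_diff_right)
  qed
  ultimately show ?thesis by blast
qed

lemma quad_expand:
  fixes A :: "complex^'n^'n"
  shows "cinner (v + of_real r *s z) (A *v (v + of_real r *s z)) =
    cinner v (A *v v) + of_real r * (cinner v (A *v z) + cinner z (A *v v)) + of_real (r^2) * cinner z (A *v z)"
  by (simp add: matrix_vector_right_distrib scale_mult_right cinner_add_left cinner_add_right
      cinner_scale_left cinner_scale_right algebra_simps power2_eq_square)

lemma cinner_self_real: "cinner v v = of_real (Re (cinner v v))"
  by (simp add: complex_eq_iff cinner_self_Im)

lemma eig_step:
  fixes A :: "complex^'n^'n"
  assumes herm: "hermitian A" and S: "S \<subseteq> eigs A" and w0: "w0 \<noteq> 0" "\<forall>s\<in>S. cinner s w0 = 0"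
  shows "\<exists>v. cinner v v = 1 \<and> (\<forall>s\<in>S. cinner s v = 0) \<and> v \<in> eigs A"
proof -
  define W where "W = {w. \<forall>s\<in>S. cinner s w = 0}"
  have Wadd: "x + y \<in> W" if "x \<in> W" "y \<in> W" for x y
    using that by (simp add: W_def cinner_add_right)
  have Wdiff: "x - y \<in> W" if "x \<in> W" "y \<in> W" for x y
    using that by (simp add: W_def cinner_diff_right)
  have Wscale: "c *s x \<in> W" if "x \<in> W" for x c
    using that by (simp add: W_def cinner_scale_right)
  have Winv: "A *v x \<in> W" if "x \<in> W" for x
  proof -
    { fix s assume s: "s \<in> S"
      then obtain c :: real where c: "A *v s = of_real c *s s" using S by (auto simp: eigs_def)
      have "cinner s (A *v x) = cinner (A *v s) x" using herm by (rule hermitian_cinner)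
      also have "... = 0" using c s that by (simp add: cinner_scale_left W_def)
      finally have "cinner s (A *v x) = 0" . }
    thus ?thesis by (simp add: W_def)
  qed
  define f where "f v = Re (cinner v (A *v v))" for v
  define K where "K = {v. Re (cinner v v) = 1} \<inter> W"
  have "bounded K"
  proof -
    have "K \<subseteq> cball 0 1"
    proof
      fix v assume "v \<in> K"
      hence "(norm v)^2 = 1" by (simp add: K_def norm_sq_cinner)
      hence "norm v = 1" using norm_ge_zero[of v] by (auto simp: power2_eq_1_iff)
      thus "v \<in> cball 0 1" by simp
    qed
    thus ?thesis using bounded_cball bounded_subset by blast
  qed
  moreover have "closed K"
  proof -
    have "closed {v::complex^'n. Re (cinner v v) = 1}"
      by (rule closed_Collect_eq) (auto intro: cinner_self_cont)
    moreover have "W = (\<Inter>s\<in>S. {w. cinner s w = 0})" by (auto simp: W_def)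
    moreover have "closed (\<Inter>s\<in>S. {w::complex^'n. cinner s w = 0})"
      by (intro closed_INT ballI closed_Collect_eq) (auto intro: cinner_cont)
    ultimately show ?thesis unfolding K_def by (intro closed_Int) auto
  qed
  ultimately have "compact K" using compact_eq_bounded_closed by blast
  have w0W: "w0 \<in> W" using w0 by (simp add: W_def)
  have scaleK: "of_real (1 / sqrt (Re (cinner w w))) *s w \<in> K" if "w \<in> W" "w \<noteq> 0" for w
  proof -
    have n: "Re (cinner w w) > 0" using that cinner_self_nonneg[of w] cinner_self_eq_0[of w] cinner_self_real[of w]
      by (metis less_eq_real_def of_real_0)
    show ?thesis using that n
      by (simp add: K_def cinner_scale_left cinner_scale_right Wscale power2_eq_square[symmetric])
  qed
  have "K \<noteq> {}" using scaleK[OF w0W w0(1)] by blast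
  moreover have "continuous_on K f" unfolding f_def by (rule quad_cont)
  ultimately obtain v where vK: "v \<in> K" and vmax: "\<forall>y\<in>K. f y \<le> f v"
    using continuous_attains_sup[OF \<open>compact K\<close>] by blast
  define \<mu> where "\<mu> = f v"
  have vW: "v \<in> W" and v1: "Re (cinner v v) = 1" using vK by (auto simp: K_def)
  have bound: "f w \<le> \<mu> * Re (cinner w w)" if "w \<in> W" for w
  proof (cases "w = 0")
    case True thus ?thesis by (simp add: f_def)
  next
    case False
    define n where "n = Re (cinner w w)"
    have n: "n > 0" using False cinner_self_nonneg[of w] cinner_self_eq_0[of w] cinner_self_real[of w]
      unfolding n_def by (metis less_eq_real_def of_real_0)
    have "f (of_real (1 / sqrt n) *s w) \<le> \<mu>" using vmax scaleK[OF that False] by (simp add: \<mu>_def n_def)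
    moreover have "f (of_real (1 / sqrt n) *s w) = f w / n"
      using n by (simp add: f_def scale_mult_right cinner_scale_left cinner_scale_right power2_eq_square[symmetric])
    ultimately have "f w / n \<le> \<mu>" by simp
    thus ?thesis using n by (simp add: n_def[symmetric] pos_divide_le_eq mult.commute)
  qed
  have key: "Re (cinner z (A *v v - of_real \<mu> *s v)) = 0" if zW: "z \<in> W" for z
  proof -
    define a where "a = Re (cinner z (A *v v - of_real \<mu> *s v))"
    define c where "c = \<mu> * Re (cinner z z) - f z"
    have c0: "c \<ge> 0" using bound[OF zW] by (simp add: c_def)
    have "2*r*a \<le> r^2 * c" for r
    proof -
      have mem: "v + of_real r *s z \<in> W" using vW zW Wadd Wscale by blast
      have e1: "f (v + of_real r *s z) = f v + r * (2 * Re (cinner z (A *v v))) + r^2 * f z"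
      proof -
        have "Re (cinner v (A *v z)) = Re (cinner z (A *v v))"
          using hermitian_cinner[OF herm, of v z] cinner_cnj[of z "A *v v"] by (metis cnj.sel(1))
        thus ?thesis unfolding f_def quad_expand by simp
      qed
      have e2: "Re (cinner (v + of_real r *s z) (v + of_real r *s z)) = 1 + r * (2 * Re (cinner z v)) + r^2 * Re (cinner z z)"
      proof -
        have "Re (cinner v z) = Re (cinner z v)" using cinner_cnj[of z v] by (metis cnj.sel(1))
        thus ?thesis using quad_expand[of v r z "mat 1"] v1 by simp
      qed
      have "f (v + of_real r *s z) \<le> \<mu> * Re (cinner (v + of_real r *s z) (v + of_real r *s z))"
        by (rule bound[OF mem])
      hence "f v + r * (2 * Re (cinner z (A *v v))) + r^2 * f z \<le> \<mu> * (1 + r * (2 * Re (cinner z v)) + r^2 * Re (cinner z z))"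
        using e1 e2 by simp
      moreover have aeq: "a = Re (cinner z (A *v v)) - \<mu> * Re (cinner z v)"
        by (simp add: a_def cinner_diff_right cinner_scale_right)
      moreover have "2*r*a = r*(2*Re (cinner z (A *v v))) - \<mu>*(r*(2*Re (cinner z v)))"
        by (simp add: aeq algebra_simps)
      moreover have "r^2*c = \<mu>*(r^2*Re (cinner z z)) - r^2*f z"
        by (simp add: c_def algebra_simps)
      moreover have "\<mu> * (1 + r * (2 * Re (cinner z v)) + r^2 * Re (cinner z z)) =
          \<mu> + \<mu>*(r*(2*Re (cinner z v))) + \<mu>*(r^2*Re (cinner z z))"
        by (simp add: algebra_simps)
      ultimately show ?thesis unfolding \<mu>_def by linarith
    qed
    thus ?thesis using real_quad_zero c0 a_def by blast
  qed
  define y where "y = A *v v - of_real \<mu> *s v"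
  have yW: "y \<in> W" unfolding y_def using vW Winv Wscale Wdiff by blast
  have "cinner y y = 0"
  proof (rule complex_eqI)
    show "Re (cinner y y) = Re 0" using key[OF yW] by (simp add: y_def)
    have "Re (cinner (\<i> *s y) y) = 0" using key[OF Wscale[OF yW]] by (simp add: y_def)
    thus "Im (cinner y y) = Im 0" by (simp add: cinner_i_Re)
  qed
  hence "y = 0" by (simp add: cinner_self_eq_0)
  hence "A *v v = of_real \<mu> *s v" by (simp add: y_def)
  hence "v \<in> eigs A" by (auto simp: eigs_def)
  moreover have "cinner v v = 1" using v1 cinner_self_real[of v] by simp
  ultimately show ?thesis using vW by (auto simp: W_def)
qed

lemma spectral_sets:
  fixes A :: "complex^'n^'n"
  assumes "hermitian A"
  shows "k \<le> CARD('n) \<Longrightarrow> \<exists>S. finite S \<and> card S = k \<and> orthonormal S \<and> S \<subseteq> eigs A"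
proof (induction k)
  case 0
  show ?case by (rule exI[of _ "{}"]) (simp add: orthonormal_def)
next
  case (Suc k)
  then obtain S where S: "finite S" "card S = k" "orthonormal S" "S \<subseteq> eigs A" by auto
  obtain w0 where w0: "w0 \<noteq> 0" "\<forall>s\<in>S. cinner s w0 = 0"
    using orth_complement_exists[OF S(3) S(1)] S(2) Suc.prems by auto
  obtain v where v: "cinner v v = 1" "\<forall>s\<in>S. cinner s v = 0" "v \<in> eigs A"
    using eig_step[OF assms S(4) w0] by blast
  have vS: "v \<notin> S" using v by auto
  have "orthonormal (insert v S)"
    unfolding orthonormal_def
  proof (intro ballI)
    fix u u' assume u: "u \<in> insert v S" and u': "u' \<in> insert v S"
    show "cinner u u' = (if u = u' then 1 else 0)"
    proof (cases "u = v")
      case True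
      show ?thesis
      proof (cases "u' = v")
        case True thus ?thesis using \<open>u = v\<close> v by simp
      next
        case False
        hence "u' \<in> S" using u' by simp
        hence "cinner u' v = 0" using v by simp
        hence "cinner v u' = 0" using cinner_cnj[of u' v] by simp
        thus ?thesis using \<open>u = v\<close> False by simp
      qed
    next
      case False
      hence uS: "u \<in> S" using u by simp
      show ?thesis
      proof (cases "u' = v")
        case True thus ?thesis using uS v vS by auto
      next
        case False
        hence "u' \<in> S" using u' by simp
        thus ?thesis using uS S(3) unfolding orthonormal_def by blast
      qed
    qed
  qed
  thus ?case using S vS v by (intro exI[of _ "insert v S"]) auto
qed

lemma spectral:
  fixes A :: "complex^'n^'n"
  assumes "hermitian A"
  shows "\<exists>e l. onb e \<and> (\<forall>i. A *v e i = of_real (l i) *s e i)"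
proof -
  obtain S where S: "finite S" "card S = CARD('n)" "orthonormal S" "S \<subseteq> eigs A"
    using spectral_sets[OF assms] by blast
  obtain h where h: "bij_betw h (UNIV::'n set) S"
    using finite_same_card_bij[of "UNIV::'n set" S] S by auto
  have hS: "h i \<in> S" for i using h by (auto simp: bij_betw_def)
  have "onb h" unfolding onb_def
  proof (intro allI)
    fix i j
    have "cinner (h i) (h j) = (if h i = h j then 1 else 0)" using S(3) hS unfolding orthonormal_def by blast
    moreover have "h i = h j \<longleftrightarrow> i = j" using h by (auto simp: bij_betw_def inj_on_def)
    ultimately show "cinner (h i) (h j) = (if i = j then 1 else 0)" by simp
  qed
  define l where "l i = (SOME c. A *v h i = of_real c *s h i)" for i
  have "\<forall>i. A *v h i = of_real (l i) *s h i"
  proof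
    fix i
    have "\<exists>c. A *v h i = of_real c *s h i" using hS[of i] S(4) by (auto simp: eigs_def)
    thus "A *v h i = of_real (l i) *s h i"
      unfolding l_def by (rule someI_ex)
  qed
  thus ?thesis using \<open>onb h\<close> by blast
qed

lemma onb_inj:
  assumes "onb e" shows "inj e"
  unfolding inj_def
proof (intro allI impI)
  fix u v assume uv: "e u = e v"
  have "cinner (e u) (e u) = 1" using assms by (simp add: onb_def)
  hence "cinner (e u) (e v) = 1" using uv by simp
  thus "u = v" using assms unfolding onb_def by (metis zero_neq_one)
qed

lemma onb_expand:
  fixes e :: "'n \<Rightarrow> complex^'n"
  assumes "onb e"
  shows "v = (\<Sum>i\<in>UNIV. cinner (e i) v *s e i)"
proof -
  have ij: "e i = e j \<longleftrightarrow> i = j" for i j using onb_inj[OF assms] by (simp add: inj_eq)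
  have orth: "orthonormal (range e)"
    using assms unfolding onb_def orthonormal_def by (auto simp: ij)
  have card: "card (range e) = CARD('n)" using onb_inj[OF assms] by (simp add: card_image)
  have indep: "vec.independent (range e)" using orthonormal_independent[OF orth] by simp
  have dimU: "vec.dim (UNIV::(complex^'n) set) = CARD('n)" by (rule vec_dim_card)
  have span: "UNIV \<subseteq> vec.span (range e)"
    using vec.card_eq_dim[of "range e" UNIV] card indep dimU by simp
  define w where "w = v - (\<Sum>i\<in>UNIV. cinner (e i) v *s e i)"
  have orthw: "cinner (e j) w = 0" for j
  proof -
    have "cinner (e j) (\<Sum>i\<in>UNIV. cinner (e i) v *s e i) = (\<Sum>i\<in>UNIV. cinner (e i) v * cinner (e j) (e i))"
      by (simp add: cinner_sum_right cinner_scale_right)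
    also have "... = (\<Sum>i\<in>UNIV. if j = i then cinner (e i) v else 0)"
      using assms unfolding onb_def by (intro sum.cong) auto
    also have "... = cinner (e j) v" by simp
    finally show ?thesis by (simp add: w_def cinner_diff_right)
  qed
  have sub: "vec.subspace {u. cinner u w = 0}"
    by (auto simp: vec.subspace_def cinner_add_left cinner_scale_left)
  have "vec.span (range e) \<subseteq> {u. cinner u w = 0}"
    by (rule vec.span_minimal) (use orthw sub in auto)
  hence "cinner w w = 0" using span by auto
  hence "w = 0" by (simp add: cinner_self_eq_0)
  thus ?thesis unfolding w_def by (metis right_minus_eq)
qed

lemma matrix_sum_mult: "(sum f X) *v (v::complex^'n) = (\<Sum>x\<in>X. f x *v v)"
proof -
  have "(sum f X *v v) $ i = (\<Sum>x\<in>X. f x *v v) $ i" for i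
    unfolding matrix_vector_mult_def by (simp add: sum_component sum_distrib_right) (rule sum.swap)
  thus ?thesis by (simp add: vec_eq_iff)
qed

lemma onb_sum_outer:
  fixes e :: "'n \<Rightarrow> complex^'n"
  assumes "onb e"
  shows "(\<Sum>i\<in>UNIV. outer (e i)) = mat 1"
  unfolding matrix_eq
  by (simp add: matrix_sum_mult outer_mult onb_expand[OF assms, symmetric])

lemma trace_sum: "trace (sum f X) = (\<Sum>x\<in>X. trace (f x :: complex^'n^'n))"
  unfolding trace_def by (simp add: sum_component) (rule sum.swap)

lemma matrix_mult_sum: "(B::complex^'n^'n) ** (sum f X) = (\<Sum>x\<in>X. B ** f x)"
proof -
  have "(B ** sum f X) $ i $ j = (\<Sum>x\<in>X. B ** f x) $ i $ j" for i j
    unfolding matrix_matrix_mult_def by (simp add: sum_component sum_distrib_left) (rule sum.swap)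
  thus ?thesis by (simp add: vec_eq_iff)
qed

lemma sum_matrix_mult: "(sum f X) ** (B::complex^'n^'n) = (\<Sum>x\<in>X. f x ** B)"
proof -
  have "(sum f X ** B) $ i $ j = (\<Sum>x\<in>X. f x ** B) $ i $ j" for i j
    unfolding matrix_matrix_mult_def by (simp add: sum_component sum_distrib_right) (rule sum.swap)
  thus ?thesis by (simp add: vec_eq_iff)
qed

lemma trace_expand:
  fixes f :: "'n \<Rightarrow> complex^'n" and M B :: "complex^'n^'n"
  assumes "onb f" "\<And>j. B *v f j = c j *s f j"
  shows "trace (M ** B) = (\<Sum>j\<in>UNIV. c j * cinner (f j) (M *v f j))"
proof -
  have "trace (M ** B) = trace ((M ** B) ** (\<Sum>j\<in>UNIV. outer (f j)))"
    by (simp add: onb_sum_outer[OF assms(1)])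
  also have "... = (\<Sum>j\<in>UNIV. trace ((M ** B) ** outer (f j)))"
    by (simp add: matrix_mult_sum trace_sum)
  also have "... = (\<Sum>j\<in>UNIV. trace (outer (f j) ** (M ** B)))"
    by (rule sum.cong[OF refl], rule trace_mul_sym)
  also have "... = (\<Sum>j\<in>UNIV. c j * cinner (f j) (M *v f j))"
    by (simp add: trace_outer matrix_vector_mul_assoc[symmetric] assms(2) scale_mult_right cinner_scale_right)
  finally show ?thesis .
qed

lemma Re_ofreal_mult: "Re (of_real c * z) = c * Re z"
  by simp

lemma psd_hermitian: "psd A \<Longrightarrow> hermitian A"
  by (simp add: psd_def)

lemma psd_quad: "psd A \<Longrightarrow> 0 \<le> Re (cinner v (A *v v))"
  by (simp add: psd_def quad_form_cinner)

lemma eig_nonneg: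
  assumes "psd A" "onb e" "A *v e i = of_real (l i) *s e i"
  shows "l i \<ge> 0"
proof -
  have "cinner (e i) (A *v e i) = of_real (l i)"
    using assms(2,3) by (simp add: cinner_scale_right onb_def)
  thus ?thesis using psd_quad[OF assms(1), of "e i"] by simp
qed

lemma trace_psd_nonneg:
  fixes M B :: "complex^'n^'n"
  assumes "psd M" "psd B"
  shows "0 \<le> Re (trace (M ** B))"
proof -
  obtain f l where f: "onb f" "\<forall>j. B *v f j = of_real (l j) *s f j"
    using spectral[OF psd_hermitian[OF assms(2)]] by blast
  have l: "l j \<ge> 0" for j using eig_nonneg[OF assms(2) f(1)] f(2) by blast
  have "trace (M ** B) = (\<Sum>j\<in>UNIV. of_real (l j) * cinner (f j) (M *v f j))"
    by (rule trace_expand[OF f(1)]) (use f(2) in simp)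
  hence "Re (trace (M ** B)) = (\<Sum>j\<in>UNIV. l j * Re (cinner (f j) (M *v f j)))"
    by simp
  also have "... \<ge> 0" using l psd_quad[OF assms(1)] by (intro sum_nonneg mult_nonneg_nonneg) auto
  finally show ?thesis .
qed

lemma log_compare:
  fixes a :: "'i \<Rightarrow> real" and b :: "'j \<Rightarrow> real"
  assumes I: "finite I" and J: "finite J" and a: "\<forall>i\<in>I. a i \<ge> 0" and b: "\<forall>j\<in>J. b j \<ge> 0"
    and l: "\<forall>i\<in>I. l i \<ge> 0" and t: "\<forall>j\<in>J. t j \<ge> 0" and ab: "sum a I = sum b J"
    and ineq: "\<And>s. s > 0 \<Longrightarrow> (\<Sum>i\<in>I. a i / (l i + s)) \<le> (\<Sum>j\<in>J. b j / (t j + s))"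
    and d: "\<delta> > 0"
  shows "(\<Sum>j\<in>J. b j * ln (t j + \<delta>)) \<le> (\<Sum>i\<in>I. a i * ln (l i + \<delta>))"
proof -
  define \<phi> where "\<phi> R = (\<Sum>j\<in>J. b j * ln (t j + \<delta> + R)) - (\<Sum>i\<in>I. a i * ln (l i + \<delta> + R))" for R
  have mono: "\<phi> 0 \<le> \<phi> R" if R: "R \<ge> 0" for R
  proof (rule DERIV_nonneg_imp_nondecreasing[OF R])
    fix x :: real assume x: "0 \<le> x" "x \<le> R"
    have dj: "((\<lambda>R. b j * ln (t j + \<delta> + R)) has_real_derivative b j / (t j + \<delta> + x)) (at x)" if "j \<in> J" for j
    proof -
      have pos: "t j + \<delta> + x > 0" using t that d x by force
      show ?thesis using pos by (auto intro!: derivative_eq_intros simp: field_simps)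
    qed
    have di: "((\<lambda>R. a i * ln (l i + \<delta> + R)) has_real_derivative a i / (l i + \<delta> + x)) (at x)" if "i \<in> I" for i
    proof -
      have pos: "l i + \<delta> + x > 0" using l that d x by force
      show ?thesis using pos by (auto intro!: derivative_eq_intros simp: field_simps)
    qed
    have "(\<phi> has_real_derivative (\<Sum>j\<in>J. b j / (t j + \<delta> + x)) - (\<Sum>i\<in>I. a i / (l i + \<delta> + x))) (at x)"
      unfolding \<phi>_def by (intro DERIV_diff DERIV_sum dj di)
    moreover have "(\<Sum>j\<in>J. b j / (t j + \<delta> + x)) - (\<Sum>i\<in>I. a i / (l i + \<delta> + x)) \<ge> 0"
      using ineq[of "\<delta> + x"] d x by (simp add: add.assoc)
    ultimately show "\<exists>y. (\<phi> has_real_derivative y) (at x) \<and> 0 \<le> y" by blast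
  qed
  define C where "C = (\<Sum>j\<in>J. b j * (t j + \<delta>))"
  have C0: "C \<ge> 0" unfolding C_def using b t d by (intro sum_nonneg) auto
  have upper: "\<phi> R \<le> C / R" if R: "R > 0" for R
  proof -
    have "b j * ln (t j + \<delta> + R) \<le> b j * ln R + b j * (t j + \<delta>) / R" if j: "j \<in> J" for j
    proof -
      have tj: "t j + \<delta> \<ge> 0" using t j d by force
      have eq: "t j + \<delta> + R = R * (1 + (t j + \<delta>)/R)" using R by (simp add: field_simps)
      have pos1: "1 + (t j + \<delta>)/R > 0" using tj R by (simp add: add_pos_nonneg)
      have "ln (t j + \<delta> + R) = ln (R * (1 + (t j + \<delta>)/R))" using eq by (rule arg_cong)
      also have "... = ln R + ln (1 + (t j + \<delta>)/R)" by (rule ln_mult_pos[OF R pos1])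
      also have "... \<le> ln R + (t j + \<delta>)/R"
        using ln_add_one_self_le_self[of "(t j + \<delta>)/R"] tj R by simp
      finally have "b j * ln (t j + \<delta> + R) \<le> b j * (ln R + (t j + \<delta>)/R)"
        using b j by (intro mult_left_mono) auto
      also have "... = b j * ln R + b j * (t j + \<delta>) / R" by (simp add: algebra_simps)
      finally show ?thesis .
    qed
    hence s1: "(\<Sum>j\<in>J. b j * ln (t j + \<delta> + R)) \<le> (\<Sum>j\<in>J. b j * ln R + b j * (t j + \<delta>) / R)"
      by (rule sum_mono)
    have "a i * ln R \<le> a i * ln (l i + \<delta> + R)" if i: "i \<in> I" for i
      using a l i d R by (intro mult_left_mono) auto
    hence s2: "(\<Sum>i\<in>I. a i * ln R) \<le> (\<Sum>i\<in>I. a i * ln (l i + \<delta> + R))"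
      by (rule sum_mono)
    have "(\<Sum>j\<in>J. b j * ln R + b j * (t j + \<delta>) / R) = (\<Sum>j\<in>J. b j) * ln R + C / R"
      by (simp add: sum.distrib sum_distrib_right sum_divide_distrib C_def)
    moreover have "(\<Sum>i\<in>I. a i * ln R) = (\<Sum>i\<in>I. a i) * ln R"
      by (simp add: sum_distrib_right)
    moreover have "sum a I * ln R = sum b J * ln R" using ab by simp
    ultimately show ?thesis using s1 s2 unfolding \<phi>_def by linarith
  qed
  have "\<phi> 0 \<le> 0"
  proof (rule ccontr)
    assume "\<not> \<phi> 0 \<le> 0"
    hence p: "\<phi> 0 > 0" by simp
    define R where "R = (C + 1) / \<phi> 0"
    have R: "R > 0" using p C0 by (simp add: R_def)
    have "\<phi> 0 \<le> C / R" using mono[of R] upper[OF R] R by simp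
    also have "C / R = C * \<phi> 0 / (C + 1)" using p C0 by (simp add: R_def field_simps)
    also have "... < \<phi> 0" using p C0 by (simp add: field_simps)
    finally show False by simp
  qed
  thus ?thesis by (simp add: \<phi>_def)
qed

lemma KL_lower:
  fixes P Q \<mu> :: "'a \<Rightarrow> real"
  assumes fin: "finite S" and P: "\<forall>i\<in>S. P i \<ge> 0" and Q: "\<forall>i\<in>S. Q i \<ge> 0" and \<mu>: "\<forall>i\<in>S. \<mu> i > 0"
  shows "ereal (\<Sum>i\<in>S. P i * ln (\<mu> i) + P i - \<mu> i * Q i) \<le> KL S P Q"
proof (cases "\<exists>x\<in>S. P x \<noteq> 0 \<and> Q x = 0")
  case True thus ?thesis by (simp add: KL_def)
next
  case False
  have "P i * ln (\<mu> i) + P i - \<mu> i * Q i \<le> (if P i = 0 then 0 else P i * ln (P i / Q i))" if i: "i \<in> S" for i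
  proof (cases "P i = 0")
    case True thus ?thesis using Q \<mu> i by (auto intro!: mult_nonneg_nonneg simp: less_imp_le)
  next
    case Pn: False
    have Pp: "P i > 0" using P i Pn by force
    have Qp: "Q i > 0" using Q i False Pn by force
    have mp: "\<mu> i > 0" using \<mu> i by blast
    have "ln (\<mu> i * Q i / P i) \<le> \<mu> i * Q i / P i - 1"
      by (rule ln_le_minus_one) (use Pp Qp mp in simp)
    hence "P i * ln (\<mu> i * Q i / P i) \<le> P i * (\<mu> i * Q i / P i - 1)"
      using Pp by (simp add: mult_left_mono)
    moreover have "P i * ln (\<mu> i * Q i / P i) = P i * ln (\<mu> i) + P i * ln (Q i) - P i * ln (P i)"
    proof -
      have "ln (\<mu> i * Q i / P i) = ln (\<mu> i * Q i) - ln (P i)"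
        by (rule ln_divide_pos) (use Pp Qp mp in auto)
      moreover have "ln (\<mu> i * Q i) = ln (\<mu> i) + ln (Q i)" by (rule ln_mult_pos) (use Qp mp in auto)
      ultimately show ?thesis by (simp add: right_diff_distrib distrib_left)
    qed
    moreover have "P i * ln (P i / Q i) = P i * ln (P i) - P i * ln (Q i)"
    proof -
      have "ln (P i / Q i) = ln (P i) - ln (Q i)" by (rule ln_divide_pos) (use Pp Qp in auto)
      thus ?thesis by (simp add: right_diff_distrib)
    qed
    moreover have "P i * (\<mu> i * Q i / P i - 1) = \<mu> i * Q i - P i" using Pp by (simp add: field_simps)
    ultimately have "P i * ln (\<mu> i) + P i - \<mu> i * Q i \<le> P i * ln (P i / Q i)" by linarith
    thus ?thesis using Pn by simp
  qed
  hence "(\<Sum>i\<in>S. P i * ln (\<mu> i) + P i - \<mu> i * Q i) \<le> (\<Sum>i\<in>S. if P i = 0 then 0 else P i * ln (P i / Q i))"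
    by (rule sum_mono)
  thus ?thesis using False by (simp add: KL_def)
qed

lemma ereal_le_eps:
  fixes x :: ereal and c k :: real
  assumes "k \<ge> 0" "\<And>\<delta>. \<delta> > 0 \<Longrightarrow> ereal (c - \<delta> * k) \<le> x"
  shows "ereal c \<le> x"
proof (cases x)
  case (real y)
  have "c \<le> y"
  proof (rule ccontr)
    assume "\<not> c \<le> y"
    define \<delta> where "\<delta> = (c - y) / (2 * (k + 1))"
    have d: "\<delta> > 0" using \<open>\<not> c \<le> y\<close> assms(1) by (simp add: \<delta>_def)
    have "c - \<delta> * k \<le> y" using assms(2)[OF d] real by simp
    moreover have "\<delta> * k < c - y"
    proof -
      have "\<delta> * k \<le> \<delta> * (k + 1)" using d by simp
      also have "... = (c - y) / 2"
      proof -
        have "2*k+2 \<noteq> 0" "k + 1 \<noteq> 0" using assms(1) by auto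
        thus ?thesis by (simp add: \<delta>_def field_simps)
      qed
      also have "... < c - y" using \<open>\<not> c \<le> y\<close> by simp
      finally show ?thesis .
    qed
    ultimately show False by simp
  qed
  thus ?thesis using real by simp
next
  case PInf thus ?thesis by simp
next
  case MInf
  thus ?thesis using assms(2)[of 1] by simp
qed

lemma scaleR_comp: "((t::real) *\<^sub>R (M::complex^'n^'n)) $ i $ j = of_real t * (M $ i $ j)"
  by (simp only: vector_scaleR_component) (rule scaleR_conv_of_real)

lemma scaleR_mult: "((t::real) *\<^sub>R (M::complex^'n^'n)) *v v = of_real t *s (M *v v)"
  unfolding matrix_vector_mult_def vec_eq_iff scaleR_comp
  by (simp add: sum_distrib_left algebra_simps)

lemma mult_sum_right: "(A::complex^'n^'n) *v sum f S = (\<Sum>x\<in>S. A *v f x)"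
proof -
  have "(A *v sum f S) $ i = (\<Sum>x\<in>S. A *v f x) $ i" for i
    unfolding matrix_vector_mult_def by (simp add: sum_component sum_distrib_left) (rule sum.swap)
  thus ?thesis by (simp add: vec_eq_iff)
qed

lemma herm_expand:
  fixes M :: "complex^'n^'n"
  assumes "hermitian M"
  shows "Re (cinner (of_real c *s u - v) (M *v (of_real c *s u - v))) =
    c^2 * Re (cinner u (M *v u)) - 2 * c * Re (cinner u (M *v v)) + Re (cinner v (M *v v))"
proof -
  have h: "Re (cinner v (M *v u)) = Re (cinner u (M *v v))"
    using hermitian_cinner[OF assms, of v u] cinner_cnj[of u "M *v v"] by (metis cnj.sel(1))
  have "cinner (of_real c *s u - v) (M *v (of_real c *s u - v)) =
     of_real c * of_real c * cinner u (M *v u) - of_real c * cinner u (M *v v) - of_real c * cinner v (M *v u) + cinner v (M *v v)"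
    by (simp add: matrix_vector_mult_diff_distrib scale_mult_right cinner_diff_left cinner_diff_right
        cinner_scale_left cinner_scale_right algebra_simps)
  hence "Re (cinner (of_real c *s u - v) (M *v (of_real c *s u - v))) =
     c * c * Re (cinner u (M *v u)) - c * Re (cinner u (M *v v)) - c * Re (cinner v (M *v u)) + Re (cinner v (M *v v))"
    by simp
  thus ?thesis using h by (simp add: power2_eq_square)
qed

lemma vec_ineq:
  fixes M :: "nat \<Rightarrow> complex^'n^'n" and e :: "'n \<Rightarrow> complex^'n"
  assumes X: "finite X" and psdM: "\<forall>x\<in>X. psd (M x)" and sumM: "(\<Sum>x\<in>X. M x) = mat 1"
    and t: "\<forall>x\<in>X. t x \<ge> 0" and onb: "onb e"
    and eig: "\<forall>i. (\<Sum>x\<in>X. t x *\<^sub>R M x) *v e i = of_real (l i) *s e i"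
    and l: "\<forall>i. l i \<ge> 0" and s: "s > 0"
  shows "(\<Sum>i\<in>UNIV. (cmod (cinner (e i) v))^2 / (l i + s)) \<le> (\<Sum>x\<in>X. Re (cinner v (M x *v v)) / (t x + s))"
proof -
  define \<omega> where "\<omega> = (\<Sum>x\<in>X. t x *\<^sub>R M x)"
  define a where "a i = of_real (1/(l i + s)) * cinner (e i) v" for i
  define u where "u = (\<Sum>i\<in>UNIV. a i *s e i)"
  have lp: "l i + s > 0" for i using l s by (simp add: add_nonneg_pos)
  have sumMv: "(\<Sum>x\<in>X. M x *v w) = w" for w
    using sumM by (metis matrix_sum_mult matrix_vector_mul_lid)
  have omega_u: "\<omega> *v u + of_real s *s u = v"
  proof -
    have "\<omega> *v u + of_real s *s u = (\<Sum>i\<in>UNIV. (a i * of_real (l i)) *s e i) + (\<Sum>i\<in>UNIV. (of_real s * a i) *s e i)"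
      unfolding u_def using eig by (simp add: \<omega>_def mult_sum_right scale_mult_right vec.scale_sum_right vector_smult_assoc mult.commute)
    also have "... = (\<Sum>i\<in>UNIV. (a i * of_real (l i) + of_real s * a i) *s e i)"
      by (simp add: sum.distrib vector_sadd_rdistrib)
    also have "... = (\<Sum>i\<in>UNIV. cinner (e i) v *s e i)"
    proof (rule sum.cong[OF refl])
      fix i
      have "a i * of_real (l i) + of_real s * a i = of_real (1 / (l i + s) * (l i + s)) * cinner (e i) v"
        unfolding a_def of_real_mult of_real_add by algebra
      also have "... = cinner (e i) v" using lp[of i] by simp
      finally show "(a i * of_real (l i) + of_real s * a i) *s e i = cinner (e i) v *s e i" by simp
    qed
    also have "... = v" using onb_expand[OF onb, of v] by simp
    finally show ?thesis .
  qed
  have cM: "(\<Sum>x\<in>X. of_real (t x + s) *s (M x *v u)) = \<omega> *v u + of_real s *s u"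
  proof -
    have "(\<Sum>x\<in>X. of_real (t x + s) *s (M x *v u)) = (\<Sum>x\<in>X. of_real (t x) *s (M x *v u)) + (\<Sum>x\<in>X. of_real s *s (M x *v u))"
      by (simp add: sum.distrib vector_sadd_rdistrib)
    also have "(\<Sum>x\<in>X. of_real (t x) *s (M x *v u)) = \<omega> *v u"
      by (simp add: \<omega>_def matrix_sum_mult scaleR_mult)
    also have "(\<Sum>x\<in>X. of_real s *s (M x *v u)) = of_real s *s u"
      by (simp add: vec.scale_sum_right[symmetric] sumMv)
    finally show ?thesis .
  qed
  have uv: "Re (cinner u v) = (\<Sum>i\<in>UNIV. (cmod (cinner (e i) v))^2 / (l i + s))"
  proof -
    have "cinner u v = (\<Sum>i\<in>UNIV. cnj (a i) * cinner (e i) v)"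
      by (simp add: u_def cinner_sum_left cinner_scale_left)
    also have "... = (\<Sum>i\<in>UNIV. of_real ((cmod (cinner (e i) v))^2 / (l i + s)))"
      by (rule sum.cong[OF refl]) (simp add: a_def cnj_mult_self mult.assoc)
    finally show ?thesis by (simp add: Re_sum)
  qed
  have per: "Re (cinner v (M x *v v)) / (t x + s) \<ge> 2 * Re (cinner u (M x *v v)) - (t x + s) * Re (cinner u (M x *v u))"
    if x: "x \<in> X" for x
  proof -
    define c where "c = t x + s"
    have c: "c > 0" using t x s by (simp add: c_def add_nonneg_pos)
    have "0 \<le> Re (cinner (of_real c *s u - v) (M x *v (of_real c *s u - v)))"
      using psdM x by (simp add: psd_quad)
    also have "... = c^2 * Re (cinner u (M x *v u)) - 2 * c * Re (cinner u (M x *v v)) + Re (cinner v (M x *v v))"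
      using psdM x by (simp add: herm_expand psd_hermitian)
    finally have "0 \<le> c * (c * Re (cinner u (M x *v u)) - 2 * Re (cinner u (M x *v v))) + Re (cinner v (M x *v v))"
      by (simp add: power2_eq_square algebra_simps)
    hence "- (c * Re (cinner u (M x *v u)) - 2 * Re (cinner u (M x *v v))) \<le> Re (cinner v (M x *v v)) / c"
      using c by (simp add: field_simps)
    thus ?thesis by (simp add: c_def)
  qed
  have "(\<Sum>x\<in>X. 2 * Re (cinner u (M x *v v)) - (t x + s) * Re (cinner u (M x *v u))) \<le> (\<Sum>x\<in>X. Re (cinner v (M x *v v)) / (t x + s))"
    using per by (intro sum_mono) auto
  moreover have "(\<Sum>x\<in>X. Re (cinner u (M x *v v))) = Re (cinner u v)"
    by (simp add: Re_sum[symmetric] cinner_sum_right[symmetric] sumMv)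
  moreover have "(\<Sum>x\<in>X. (t x + s) * Re (cinner u (M x *v u))) = Re (cinner u v)"
  proof -
    have "(\<Sum>x\<in>X. (t x + s) * Re (cinner u (M x *v u))) = Re (cinner u (\<Sum>x\<in>X. of_real (t x + s) *s (M x *v u)))"
      by (simp add: cinner_sum_right cinner_scale_right Re_sum vector_sadd_rdistrib cinner_add_right distrib_right)
    thus ?thesis using cM omega_u by metis
  qed
  ultimately show ?thesis using uv by (simp add: sum_subtractf sum_distrib_left[symmetric])
qed

lemma outer_mult_outer: "outer a ** outer b = (\<chi> i j. cinner a b * (a$i * cnj (b$j)))"
  unfolding outer_def matrix_matrix_mult_def cinner_def vec_eq_iff
  by (simp add: sum_distrib_left sum_distrib_right algebra_simps)

lemma adjoint_outer: "adjoint (outer a) = outer a"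
  by (simp add: adjoint_def outer_def vec_eq_iff mult.commute)

lemma rank_outer:
  fixes a :: "complex^'n"
  assumes "a \<noteq> 0"
  shows "rank (outer a) = 1"
proof -
  define ca :: "complex^'n" where "ca = (\<chi> j. cnj (a$j))"
  have rw: "row i (outer a) = a$i *s ca" for i by (simp add: row_def outer_def ca_def vec_eq_iff)
  obtain k where k: "a$k \<noteq> 0" using assms by (auto simp: vec_eq_iff)
  have ca0: "ca \<noteq> 0" using k by (auto simp: ca_def vec_eq_iff)
  have rs: "row i (outer a) \<in> vec.span {ca}" for i
    unfolding rw by (rule vec.span_scale) (rule vec.span_base, simp)
  have "rows (outer a) \<subseteq> vec.span {ca}"
    using rs by (auto simp: rows_def)
  moreover have "{ca} \<subseteq> vec.span (rows (outer a))"
  proof -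
    have eq: "ca = (1 / a$k) *s row k (outer a)" using k by (simp add: rw vector_smult_assoc)
    have m: "(1 / a$k) *s row k (outer a) \<in> vec.span (rows (outer a))"
      by (intro vec.span_scale vec.span_base) (auto simp: rows_def)
    show ?thesis using m eq by simp
  qed
  ultimately have "vec.span (rows (outer a)) = vec.span {ca}" using vec.span_eq by blast
  hence "vec.dim (rows (outer a)) = vec.dim {ca}" by (metis vec.dim_span)
  thus ?thesis using ca0 by (simp add: row_rank_def_gen)
qed

lemma onb_family:
  assumes "onb e"
  shows "orth_rank_one_family (\<lambda>i. outer (e i))"
  unfolding orth_rank_one_family_def rank_one_projector_def
proof (intro conjI allI impI)
  fix i
  have ii: "cinner (e i) (e i) = 1" using assms by (simp add: onb_def)
  show "outer (e i) ** outer (e i) = outer (e i)" by (simp only: outer_mult_outer ii) (simp add: outer_def)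
  show "adjoint (outer (e i)) = outer (e i)" by (rule adjoint_outer)
  have "e i \<noteq> 0" using ii by auto
  thus "rank (outer (e i)) = 1" by (rule rank_outer)
next
  fix i j :: 'a assume "i \<noteq> j"
  hence "cinner (e i) (e j) = 0" using assms by (simp add: onb_def)
  thus "outer (e i) ** outer (e j) = 0" by (simp add: outer_mult_outer vec_eq_iff)
qed

lemma family_psd:
  assumes "orth_rank_one_family P"
  shows "psd (P i)"
proof -
  have pp: "P i ** P i = P i" and adj: "adjoint (P i) = P i"
    using assms by (auto simp: orth_rank_one_family_def rank_one_projector_def)
  have herm: "hermitian (P i)" using adj by (simp add: hermitian_def)
  have "0 \<le> Re (quad_form (P i) v)" for v
  proof -
    have "P i *v v = P i *v (P i *v v)" using pp by (simp add: matrix_vector_mul_assoc)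
    hence "cinner v (P i *v v) = cinner (P i *v v) (P i *v v)"
      using hermitian_cinner[OF herm, of v "P i *v v"] by simp
    thus ?thesis using cinner_self_nonneg by (simp add: quad_form_cinner)
  qed
  thus ?thesis using herm by (simp add: psd_def)
qed

lemma rank_zero: "rank (0::complex^'n^'n) = 0"
proof -
  have "rows (0::complex^'n^'n) = {0}" by (auto simp: rows_def row_def vec_eq_iff)
  thus ?thesis by (simp add: row_rank_def_gen)
qed

lemma family_sum:
  fixes P :: "'n \<Rightarrow> complex^'n^'n"
  assumes fam: "orth_rank_one_family P"
  shows "(\<Sum>i\<in>UNIV. P i) = mat 1"
proof -
  have pp: "P i ** P i = P i" and rk: "rank (P i) = 1" for i
    using fam by (auto simp: orth_rank_one_family_def rank_one_projector_def)
  have orth: "P j ** P i = 0" if "j \<noteq> i" for i j using fam that by (auto simp: orth_rank_one_family_def)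
  have nz: "P i \<noteq> 0" for i
  proof
    assume "P i = 0"
    hence "rank (P i) = 0" using rank_zero by simp
    thus False using rk[of i] by simp
  qed
  have "\<exists>x. P i *v x \<noteq> 0" for i
  proof (rule ccontr)
    assume "\<not> (\<exists>x. P i *v x \<noteq> 0)"
    hence "P i = 0" by (simp add: matrix_eq)
    thus False using nz by simp
  qed
  define u where "u i = P i *v (SOME x. P i *v x \<noteq> 0)" for i
  have unz: "u i \<noteq> 0" for i unfolding u_def by (rule someI_ex) (rule \<open>\<exists>x. P i *v x \<noteq> 0\<close>)
  have ufix: "P i *v u i = u i" for i unfolding u_def by (simp add: matrix_vector_mul_assoc pp)
  have uorth: "P j *v u i = 0" if "j \<noteq> i" for i j unfolding u_def using orth[OF that] by (simp add: matrix_vector_mul_assoc)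
  have Pu: "P j *v u i = (if j = i then u i else 0)" for i j using ufix uorth by auto
  have inj: "inj u"
  proof (rule injI)
    fix i j assume "u i = u j"
    show "i = j"
    proof (rule ccontr)
      assume "i \<noteq> j"
      hence "P j *v u i = 0" using uorth by auto
      hence "u j = 0" using \<open>u i = u j\<close> ufix[of j] by simp
      thus False using unz by simp
    qed
  qed
  have indep: "vec.independent (range u)"
  proof -
    { fix c assume h: "(\<Sum>w\<in>range u. c w *s w) = 0"
      have h2: "(\<Sum>i\<in>UNIV. c (u i) *s u i) = 0" using h by (simp add: sum.reindex[OF inj])
      have "c (u j) = 0" for j
      proof -
        have "0 = P j *v (\<Sum>i\<in>UNIV. c (u i) *s u i)" using h2 by simp
        also have "... = (\<Sum>i\<in>UNIV. c (u i) *s (P j *v u i))" by (simp add: mult_sum_right scale_mult_right)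
        also have "... = (\<Sum>i\<in>UNIV. if j = i then c (u i) *s u i else 0)" by (rule sum.cong[OF refl]) (simp add: Pu)
        also have "... = c (u j) *s u j" by simp
        finally show ?thesis using unz[of j] by simp
      qed
      hence "\<forall>w\<in>range u. c w = 0" by auto }
    thus ?thesis by (simp add: vec.independent_explicit)
  qed
  have card: "card (range u) = CARD('n)" using inj by (simp add: card_image)
  have dimU: "vec.dim (UNIV::(complex^'n) set) = CARD('n)" by (rule vec_dim_card)
  have span: "UNIV \<subseteq> vec.span (range u)"
    using vec.card_eq_dim[of "range u" UNIV] card indep dimU by simp
  define S where "S = (\<Sum>i\<in>UNIV. P i)"
  have Su: "S *v u k = u k" for k
  proof -
    have "S *v u k = (\<Sum>i\<in>UNIV. P i *v u k)" by (simp add: S_def matrix_sum_mult)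
    also have "... = (\<Sum>i\<in>UNIV. if i = k then u k else 0)" by (rule sum.cong[OF refl]) (simp add: Pu)
    also have "... = u k" by simp
    finally show ?thesis .
  qed
  have sub: "vec.subspace {x. S *v x = x}"
    by (auto simp: vec.subspace_def matrix_vector_right_distrib scale_mult_right)
  have "vec.span (range u) \<subseteq> {x. S *v x = x}"
    by (rule vec.span_minimal) (use Su sub in auto)
  hence "S *v x = x" for x using span by auto
  hence "S = mat 1" by (simp add: matrix_eq)
  thus ?thesis by (simp add: S_def)
qed

lemma povm_sum_meas:
  fixes A :: "complex^'n^'n" and M :: "nat \<Rightarrow> complex^'n^'n"
  assumes "povm X M"
  shows "(\<Sum>x\<in>X. meas M A x) = Re (trace A)"
proof -
  have "(\<Sum>x\<in>X. meas M A x) = Re (trace ((\<Sum>x\<in>X. M x) ** A))"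
    by (simp add: meas_def sum_matrix_mult trace_sum Re_sum)
  thus ?thesis using assms by (simp add: povm_def)
qed

lemma trace_onb:
  fixes A :: "complex^'n^'n"
  assumes "onb e"
  shows "trace A = (\<Sum>i\<in>UNIV. cinner (e i) (A *v e i))"
  using trace_expand[OF assms, of "mat 1" "\<lambda>_. 1" A] by simp

lemma sum_scaleR_mult: "(\<Sum>x\<in>X. t x *\<^sub>R (M x :: complex^'n^'n)) *v v = (\<Sum>x\<in>X. of_real (t x) *s (M x *v v))"
  by (simp add: matrix_sum_mult scaleR_mult)

lemma hermitian_sum_scaleR:
  fixes M :: "nat \<Rightarrow> complex^'n^'n"
  assumes "\<forall>x\<in>X. hermitian (M x)"
  shows "hermitian (\<Sum>x\<in>X. t x *\<^sub>R M x)"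
proof -
  have h: "M x $ i $ j = cnj (M x $ j $ i)" if "x \<in> X" for x i j
  proof -
    have "adjoint (M x) $ i $ j = M x $ i $ j" using assms that by (simp add: hermitian_def)
    thus ?thesis by (simp add: adjoint_def)
  qed
  show ?thesis
    unfolding hermitian_def adjoint_def vec_eq_iff
    by (auto simp: sum_component scaleR_comp intro!: sum.cong) (metis h)
qed

lemma main_lemma:
  fixes \<rho> \<sigma> :: "complex^'n^'n" and M :: "nat \<Rightarrow> complex^'n^'n"
  assumes rho: "density_operator \<rho>" and sig: "psd \<sigma>" and pv: "povm X M"
    and t: "\<forall>x\<in>X. t x \<ge> 0" and tpos: "\<forall>x\<in>X. meas M \<rho> x \<noteq> 0 \<longrightarrow> t x > 0"
  shows "\<exists>P. orth_rank_one_family P \<and>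
     ereal ((\<Sum>x\<in>{x\<in>X. meas M \<rho> x \<noteq> 0}. meas M \<rho> x * ln (t x)) + 1 - (\<Sum>x\<in>X. meas M \<sigma> x * t x))
       \<le> KL UNIV (meas P \<rho>) (meas P \<sigma>)"
proof -
  have X: "finite X" and psdM: "\<forall>x\<in>X. psd (M x)" and sumM: "(\<Sum>x\<in>X. M x) = mat 1"
    using pv by (auto simp: povm_def)
  have psdrho: "psd \<rho>" and tr1: "trace \<rho> = 1" using rho by (auto simp: density_operator_def)
  define \<omega> where "\<omega> = (\<Sum>x\<in>X. t x *\<^sub>R M x)"
  have herm\<omega>: "hermitian \<omega>" unfolding \<omega>_def
    by (rule hermitian_sum_scaleR) (use psdM in \<open>auto simp: psd_hermitian\<close>)
  obtain e l where e: "onb e" and el: "\<forall>i. \<omega> *v e i = of_real (l i) *s e i"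
    using spectral[OF herm\<omega>] by blast
  have \<omega>v: "\<omega> *v v = (\<Sum>x\<in>X. of_real (t x) *s (M x *v v))" for v
    by (simp add: \<omega>_def sum_scaleR_mult)
  have l0: "l i \<ge> 0" for i
  proof -
    have "cinner (e i) (\<omega> *v e i) = of_real (l i)" using e el by (simp add: cinner_scale_right onb_def)
    moreover have "Re (cinner (e i) (\<omega> *v e i)) = (\<Sum>x\<in>X. t x * Re (cinner (e i) (M x *v e i)))"
      by (simp add: \<omega>v cinner_sum_right cinner_scale_right Re_sum)
    moreover have "(\<Sum>x\<in>X. t x * Re (cinner (e i) (M x *v e i))) \<ge> 0"
      using t psdM by (intro sum_nonneg mult_nonneg_nonneg) (auto simp: psd_quad)
    ultimately show ?thesis by simp
  qed
  obtain f r where f: "onb f" and fr: "\<forall>j. \<rho> *v f j = of_real (r j) *s f j"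
    using spectral[OF psd_hermitian[OF psdrho]] by blast
  have r0: "r j \<ge> 0" for j using eig_nonneg[OF psdrho f] fr by blast
  define P where "P i = outer (e i)" for i
  have fam: "orth_rank_one_family P" unfolding P_def by (rule onb_family[OF e])
  define p where "p x = meas M \<rho> x" for x
  define q where "q x = meas M \<sigma> x" for x
  define p' where "p' i = meas P \<rho> i" for i
  define q' where "q' i = meas P \<sigma> i" for i
  have p'eq: "p' i = Re (cinner (e i) (\<rho> *v e i))" for i by (simp add: p'_def meas_def P_def trace_outer)
  have q'eq: "q' i = Re (cinner (e i) (\<sigma> *v e i))" for i by (simp add: q'_def meas_def P_def trace_outer)
  have p_exp: "p x = (\<Sum>j\<in>UNIV. r j * Re (cinner (f j) (M x *v f j)))" for x
  proof -
    have "trace (M x ** \<rho>) = (\<Sum>j\<in>UNIV. of_real (r j) * cinner (f j) (M x *v f j))"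
      by (rule trace_expand[OF f]) (use fr in simp)
    thus ?thesis by (simp add: p_def meas_def Re_sum)
  qed
  have p'_exp: "p' i = (\<Sum>j\<in>UNIV. r j * (cmod (cinner (e i) (f j)))^2)" for i
  proof -
    have "trace (outer (e i) ** \<rho>) = (\<Sum>j\<in>UNIV. of_real (r j) * cinner (f j) (outer (e i) *v f j))"
      by (rule trace_expand[OF f]) (use fr in simp)
    also have "... = (\<Sum>j\<in>UNIV. of_real (r j) * of_real ((cmod (cinner (e i) (f j)))^2))"
    proof (rule sum.cong[OF refl])
      fix j
      have "cinner (f j) (outer (e i) *v f j) = cnj (cinner (f j) (e i)) * cinner (f j) (e i)"
        by (simp add: outer_mult cinner_scale_right cinner_cnj mult.commute)
      also have "... = of_real ((cmod (cinner (e i) (f j)))^2)"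
      proof -
        have ce: "cinner (e i) (f j) = cnj (cinner (f j) (e i))" by (simp add: cinner_cnj)
        show ?thesis by (simp add: cnj_mult_self ce)
      qed
      finally show "of_real (r j) * cinner (f j) (outer (e i) *v f j) = of_real (r j) * of_real ((cmod (cinner (e i) (f j)))^2)"
        by simp
    qed
    finally show ?thesis by (simp add: p'_def meas_def P_def Re_sum)
  qed
  have p0: "p x \<ge> 0" if "x \<in> X" for x using trace_psd_nonneg[of "M x" \<rho>] psdM psdrho that by (simp add: p_def meas_def)
  have q0: "q x \<ge> 0" if "x \<in> X" for x using trace_psd_nonneg[of "M x" \<sigma>] psdM sig that by (simp add: q_def meas_def)
  have p'0: "p' i \<ge> 0" for i using psd_quad[OF psdrho] by (simp add: p'eq)
  have q'0: "q' i \<ge> 0" for i using psd_quad[OF sig] by (simp add: q'eq)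
  have sum_p: "(\<Sum>x\<in>X. p x) = 1" using povm_sum_meas[OF pv, of \<rho>] tr1 by (simp add: p_def)
  have "Re (trace \<rho>) = (\<Sum>i\<in>UNIV. p' i)" by (simp add: trace_onb[OF e, of \<rho>] p'eq)
  hence sum_p': "(\<Sum>i\<in>UNIV. p' i) = 1" using tr1 by simp
  have sum_q': "(\<Sum>i\<in>UNIV. q' i) = Re (trace \<sigma>)"
    by (simp add: trace_onb[OF e, of \<sigma>] q'eq)
  have sum_lq: "(\<Sum>i\<in>UNIV. l i * q' i) = (\<Sum>x\<in>X. q x * t x)"
  proof -
    have "(\<Sum>x\<in>X. q x * t x) = (\<Sum>x\<in>X. t x * (\<Sum>i\<in>UNIV. Re (cinner (e i) (M x *v (\<sigma> *v e i)))))"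
    proof (rule sum.cong[OF refl])
      fix x
      have "trace (M x ** \<sigma>) = (\<Sum>i\<in>UNIV. cinner (e i) ((M x ** \<sigma>) *v e i))" by (rule trace_onb[OF e])
      thus "q x * t x = t x * (\<Sum>i\<in>UNIV. Re (cinner (e i) (M x *v (\<sigma> *v e i))))"
        by (simp add: q_def meas_def Re_sum matrix_vector_mul_assoc)
    qed
    also have "... = (\<Sum>i\<in>UNIV. Re (cinner (e i) (\<omega> *v (\<sigma> *v e i))))"
      by (simp add: \<omega>v cinner_sum_right cinner_scale_right Re_sum sum_distrib_left) (rule sum.swap)
    also have "... = (\<Sum>i\<in>UNIV. l i * q' i)"
    proof (rule sum.cong[OF refl])
      fix i
      have "cinner (e i) (\<omega> *v (\<sigma> *v e i)) = cinner (\<omega> *v e i) (\<sigma> *v e i)"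
        by (rule hermitian_cinner[OF herm\<omega>])
      thus "Re (cinner (e i) (\<omega> *v (\<sigma> *v e i))) = l i * q' i"
        using el by (simp add: cinner_scale_left q'eq)
    qed
    finally show ?thesis by simp
  qed
  have sineq: "(\<Sum>i\<in>UNIV. p' i / (l i + s)) \<le> (\<Sum>x\<in>X. p x / (t x + s))" if s: "s > 0" for s
  proof -
    have "(\<Sum>i\<in>UNIV. p' i / (l i + s)) = (\<Sum>j\<in>UNIV. r j * (\<Sum>i\<in>UNIV. (cmod (cinner (e i) (f j)))^2 / (l i + s)))"
      by (simp add: p'_exp sum_divide_distrib sum_distrib_left) (rule sum.swap)
    also have "... \<le> (\<Sum>j\<in>UNIV. r j * (\<Sum>x\<in>X. Re (cinner (f j) (M x *v f j)) / (t x + s)))"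
    proof (rule sum_mono, rule mult_left_mono)
      fix j
      show "(\<Sum>i\<in>UNIV. (cmod (cinner (e i) (f j)))^2 / (l i + s)) \<le> (\<Sum>x\<in>X. Re (cinner (f j) (M x *v f j)) / (t x + s))"
        by (rule vec_ineq[OF X psdM sumM t e]) (use el[unfolded \<omega>_def] l0 s in auto)
      show "0 \<le> r j" by (rule r0)
    qed
    also have "... = (\<Sum>x\<in>X. p x / (t x + s))"
      by (simp add: p_exp sum_divide_distrib sum_distrib_left) (rule sum.swap)
    finally show ?thesis .
  qed
  have logc: "(\<Sum>x\<in>X. p x * ln (t x + \<delta>)) \<le> (\<Sum>i\<in>UNIV. p' i * ln (l i + \<delta>))" if d: "\<delta> > 0" for \<delta>
    by (rule log_compare[where a=p' and b=p]) (use X p0 p'0 l0 t sum_p sum_p' sineq d in auto)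
  define K where "K = (\<Sum>x\<in>{x\<in>X. p x \<noteq> 0}. p x * ln (t x))"
  define T where "T = (\<Sum>x\<in>X. q x * t x)"
  have bound: "ereal (K + 1 - T - \<delta> * Re (trace \<sigma>)) \<le> KL UNIV p' q'" if d: "\<delta> > 0" for \<delta>
  proof -
    have "K \<le> (\<Sum>x\<in>X. p x * ln (t x + \<delta>))"
    proof -
      have "K = (\<Sum>x\<in>X. if p x \<noteq> 0 then p x * ln (t x) else 0)" unfolding K_def by (rule sum.inter_filter[OF X])
      also have "... \<le> (\<Sum>x\<in>X. p x * ln (t x + \<delta>))"
      proof (rule sum_mono)
        fix x assume x: "x \<in> X"
        show "(if p x \<noteq> 0 then p x * ln (t x) else 0) \<le> p x * ln (t x + \<delta>)"
        proof (cases "p x = 0")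
          case True thus ?thesis by simp
        next
          case False
          have "t x > 0" using tpos x False by (simp add: p_def)
          hence "ln (t x) \<le> ln (t x + \<delta>)" using d by simp
          thus ?thesis using False p0[OF x] by (simp add: mult_left_mono)
        qed
      qed
      finally show ?thesis .
    qed
    also have "... \<le> (\<Sum>i\<in>UNIV. p' i * ln (l i + \<delta>))" by (rule logc[OF d])
    finally have K1: "K \<le> (\<Sum>i\<in>UNIV. p' i * ln (l i + \<delta>))" .
    have "ereal (\<Sum>i\<in>UNIV. p' i * ln (l i + \<delta>) + p' i - (l i + \<delta>) * q' i) \<le> KL UNIV p' q'"
      by (rule KL_lower) (use p'0 q'0 l0 d in \<open>auto intro: add_nonneg_pos\<close>)
    moreover have "(\<Sum>i\<in>UNIV. p' i * ln (l i + \<delta>) + p' i - (l i + \<delta>) * q' i) =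
        (\<Sum>i\<in>UNIV. p' i * ln (l i + \<delta>)) + (\<Sum>i\<in>UNIV. p' i) - (\<Sum>i\<in>UNIV. l i * q' i) - \<delta> * (\<Sum>i\<in>UNIV. q' i)"
      by (simp add: sum.distrib sum_subtractf distrib_right sum_distrib_left)
    ultimately have "ereal ((\<Sum>i\<in>UNIV. p' i * ln (l i + \<delta>)) + 1 - T - \<delta> * Re (trace \<sigma>)) \<le> KL UNIV p' q'"
      using sum_p' sum_lq sum_q' by (simp add: T_def)
    moreover have "K + 1 - T - \<delta> * Re (trace \<sigma>) \<le> (\<Sum>i\<in>UNIV. p' i * ln (l i + \<delta>)) + 1 - T - \<delta> * Re (trace \<sigma>)"
      using K1 by simp
    ultimately show ?thesis by (meson ereal_less_eq(3) order_trans)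
  qed
  have trs: "Re (trace \<sigma>) \<ge> 0" using sum_q' q'0 by (metis sum_nonneg)
  have "ereal (K + 1 - T) \<le> KL UNIV p' q'"
    by (rule ereal_le_eps[OF trs]) (use bound in \<open>simp add: algebra_simps\<close>)
  hence "ereal (K + 1 - T) \<le> KL UNIV (meas P \<rho>) (meas P \<sigma>)"
    by (simp add: p'_def[abs_def] q'_def[abs_def])
  thus ?thesis using fam by (auto simp: K_def T_def p_def q_def)
qed

lemma ereal_all_le_infty:
  fixes x :: ereal
  assumes "\<And>B. ereal B \<le> x"
  shows "x = \<infinity>"
proof (cases x)
  case (real y)
  thus ?thesis using assms[of "y + 1"] by simp
next
  case PInf thus ?thesis .
next
  case MInf thus ?thesis using assms[of 0] by simp
qed

lemma DP_le_DM:
  fixes \<rho> \<sigma> :: "complex^'n^'n"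
  shows "proj_measured_rel_entropy \<rho> \<sigma> \<le> measured_rel_entropy \<rho> \<sigma>"
  unfolding proj_measured_rel_entropy_def
proof (rule SUP_least)
  fix P :: "'n \<Rightarrow> complex^'n^'n" assume "P \<in> {P. orth_rank_one_family P}"
  hence fam: "orth_rank_one_family P" by simp
  obtain g where g: "bij_betw g {0..<CARD('n)} (UNIV::'n set)"
    using ex_bij_betw_nat_finite[of "UNIV::'n set"] by auto
  define X :: "nat set" where "X = {0..<CARD('n)}"
  define M where "M k = P (g k)" for k
  have pv: "povm X M"
  proof -
    have "(\<Sum>k\<in>X. M k) = (\<Sum>i\<in>UNIV. P i)"
      unfolding M_def X_def by (rule sum.reindex_bij_betw[OF g])
    thus ?thesis using family_sum[OF fam] family_psd[OF fam] by (simp add: povm_def X_def M_def)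
  qed
  have KLeq: "KL X (meas M \<rho>) (meas M \<sigma>) = KL UNIV (meas P \<rho>) (meas P \<sigma>)"
  proof -
    have mm: "meas M A k = meas P A (g k)" for A k by (simp add: meas_def M_def)
    have ex: "(\<exists>k\<in>X. meas M \<rho> k \<noteq> 0 \<and> meas M \<sigma> k = 0) \<longleftrightarrow> (\<exists>i\<in>UNIV. meas P \<rho> i \<noteq> 0 \<and> meas P \<sigma> i = 0)"
    proof
      assume "\<exists>k\<in>X. meas M \<rho> k \<noteq> 0 \<and> meas M \<sigma> k = 0"
      thus "\<exists>i\<in>UNIV. meas P \<rho> i \<noteq> 0 \<and> meas P \<sigma> i = 0" unfolding mm by blast
    next
      assume "\<exists>i\<in>UNIV. meas P \<rho> i \<noteq> 0 \<and> meas P \<sigma> i = 0"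
      then obtain i where i: "meas P \<rho> i \<noteq> 0" "meas P \<sigma> i = 0" by blast
      have "i \<in> g ` {0..<CARD('n)}" using g by (simp add: bij_betw_def)
      then obtain k where k: "k \<in> X" "g k = i" unfolding X_def by blast
      show "\<exists>k\<in>X. meas M \<rho> k \<noteq> 0 \<and> meas M \<sigma> k = 0" using i k unfolding mm by blast
    qed
    have sm: "(\<Sum>k\<in>X. if meas M \<rho> k = 0 then 0 else meas M \<rho> k * ln (meas M \<rho> k / meas M \<sigma> k)) =
       (\<Sum>i\<in>UNIV. if meas P \<rho> i = 0 then 0 else meas P \<rho> i * ln (meas P \<rho> i / meas P \<sigma> i))"
      unfolding mm X_def
      by (rule sum.reindex_bij_betw[OF g, where g="\<lambda>i. if meas P \<rho> i = 0 then 0 else meas P \<rho> i * ln (meas P \<rho> i / meas P \<sigma> i)"])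
    show ?thesis unfolding KL_def using ex sm by simp
  qed
  have "KL X (meas M \<rho>) (meas M \<sigma>) \<le> measured_rel_entropy \<rho> \<sigma>"
    unfolding measured_rel_entropy_def
    by (rule SUP_upper2[of "(X, M)"]) (use pv in auto)
  thus "KL UNIV (meas P \<rho>) (meas P \<sigma>) \<le> measured_rel_entropy \<rho> \<sigma>" using KLeq by simp
qed

lemma DM_le_DP:
  fixes \<rho> \<sigma> :: "complex^'n^'n"
  assumes rho: "density_operator \<rho>" and sig: "psd \<sigma>"
  shows "measured_rel_entropy \<rho> \<sigma> \<le> proj_measured_rel_entropy \<rho> \<sigma>"
  unfolding measured_rel_entropy_def
proof (rule SUP_least)
  fix XM :: "nat set \<times> (nat \<Rightarrow> complex^'n^'n)"
  assume "XM \<in> {(X, M). povm X M}"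
  then obtain X M where XM: "XM = (X, M)" and pv: "povm X M" by auto
  have X: "finite X" and psdM: "\<forall>x\<in>X. psd (M x)" using pv by (auto simp: povm_def)
  have psdrho: "psd \<rho>" and tr1: "trace \<rho> = 1" using rho by (auto simp: density_operator_def)
  define p where "p x = meas M \<rho> x" for x
  define q where "q x = meas M \<sigma> x" for x
  have p0: "p x \<ge> 0" if "x \<in> X" for x using trace_psd_nonneg[of "M x" \<rho>] psdM psdrho that by (simp add: p_def meas_def)
  have q0: "q x \<ge> 0" if "x \<in> X" for x using trace_psd_nonneg[of "M x" \<sigma>] psdM sig that by (simp add: q_def meas_def)
  have sum_p: "(\<Sum>x\<in>X. p x) = 1" using povm_sum_meas[OF pv, of \<rho>] tr1 by (simp add: p_def)
  have sum_q: "(\<Sum>x\<in>X. q x) = Re (trace \<sigma>)" using povm_sum_meas[OF pv, of \<sigma>] by (simp add: q_def)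
  have upper: "KL UNIV (meas P \<rho>) (meas P \<sigma>) \<le> proj_measured_rel_entropy \<rho> \<sigma>"
    if "orth_rank_one_family P" for P
    unfolding proj_measured_rel_entropy_def by (rule SUP_upper) (use that in simp)
  show "KL (fst XM) (meas (snd XM) \<rho>) (meas (snd XM) \<sigma>) \<le> proj_measured_rel_entropy \<rho> \<sigma>"
  proof (cases "\<exists>x\<in>X. p x \<noteq> 0 \<and> q x = 0")
    case True
    then obtain x0 where x0: "x0 \<in> X" "p x0 \<noteq> 0" "q x0 = 0" by blast
    have pp: "p x0 > 0" using p0[OF x0(1)] x0(2) by simp
    have "proj_measured_rel_entropy \<rho> \<sigma> = \<infinity>"
    proof (rule ereal_all_le_infty)
      fix B :: real
      define N where "N = exp ((B - 1 + Re (trace \<sigma>)) / p x0)"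
      define t where "t x = (if x = x0 then N else 1)" for x
      have Npos: "N > 0" by (simp add: N_def)
      have t0: "\<forall>x\<in>X. t x \<ge> 0" using Npos by (simp add: t_def)
      have tp: "\<forall>x\<in>X. meas M \<rho> x \<noteq> 0 \<longrightarrow> t x > 0" using Npos by (simp add: t_def)
      obtain P where fam: "orth_rank_one_family P" and
        le: "ereal ((\<Sum>x\<in>{x\<in>X. meas M \<rho> x \<noteq> 0}. meas M \<rho> x * ln (t x)) + 1 - (\<Sum>x\<in>X. meas M \<sigma> x * t x))
          \<le> KL UNIV (meas P \<rho>) (meas P \<sigma>)"
        using main_lemma[OF rho sig pv t0 tp] by blast
      have K: "(\<Sum>x\<in>{x\<in>X. p x \<noteq> 0}. p x * ln (t x)) = p x0 * ln N"
      proof -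
        have mem: "x0 \<in> {x\<in>X. p x \<noteq> 0}" using x0 by simp
        have fin: "finite {x\<in>X. p x \<noteq> 0}" using X by simp
        have "(\<Sum>x\<in>{x\<in>X. p x \<noteq> 0}. p x * ln (t x)) = p x0 * ln (t x0) + (\<Sum>x\<in>{x\<in>X. p x \<noteq> 0} - {x0}. p x * ln (t x))"
          by (rule sum.remove[OF fin mem])
        also have "(\<Sum>x\<in>{x\<in>X. p x \<noteq> 0} - {x0}. p x * ln (t x)) = 0"
          by (rule sum.neutral) (auto simp: t_def)
        finally show ?thesis by (simp add: t_def)
      qed
      have T: "(\<Sum>x\<in>X. q x * t x) = Re (trace \<sigma>)"
      proof -
        have "(\<Sum>x\<in>X. q x * t x) = (\<Sum>x\<in>X. q x)"
          by (rule sum.cong[OF refl]) (auto simp: t_def x0)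
        thus ?thesis using sum_q by simp
      qed
      have "p x0 * ln N = B - 1 + Re (trace \<sigma>)" using pp by (simp add: N_def)
      hence "ereal B \<le> KL UNIV (meas P \<rho>) (meas P \<sigma>)"
        using le K T by (simp add: p_def[symmetric] q_def[symmetric])
      thus "ereal B \<le> proj_measured_rel_entropy \<rho> \<sigma>" using upper[OF fam] by (rule order_trans)
    qed
    thus ?thesis by simp
  next
    case False
    define t where "t x = (if p x = 0 then 0 else p x / q x)" for x
    have t0: "\<forall>x\<in>X. t x \<ge> 0" using p0 q0 by (simp add: t_def)
    have tpos: "\<forall>x\<in>X. meas M \<rho> x \<noteq> 0 \<longrightarrow> t x > 0"
    proof (intro ballI impI)
      fix x assume x: "x \<in> X" and "meas M \<rho> x \<noteq> 0"
      hence pn: "p x \<noteq> 0" by (simp add: p_def)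
      hence "q x \<noteq> 0" using False x by blast
      hence "q x > 0" using q0[OF x] by simp
      moreover have "p x > 0" using p0[OF x] pn by simp
      ultimately show "t x > 0" using pn by (simp add: t_def)
    qed
    obtain P where fam: "orth_rank_one_family P" and
      le: "ereal ((\<Sum>x\<in>{x\<in>X. meas M \<rho> x \<noteq> 0}. meas M \<rho> x * ln (t x)) + 1 - (\<Sum>x\<in>X. meas M \<sigma> x * t x))
          \<le> KL UNIV (meas P \<rho>) (meas P \<sigma>)"
      using main_lemma[OF rho sig pv t0 tpos] by blast
    have T: "(\<Sum>x\<in>X. q x * t x) = 1"
    proof -
      have "(\<Sum>x\<in>X. q x * t x) = (\<Sum>x\<in>X. p x)"
      proof (rule sum.cong[OF refl])
        fix x assume x: "x \<in> X"
        show "q x * t x = p x"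
        proof (cases "p x = 0")
          case True thus ?thesis by (simp add: t_def)
        next
          case pn: False
          hence "q x \<noteq> 0" using False x by blast
          thus ?thesis using pn by (simp add: t_def)
        qed
      qed
      thus ?thesis using sum_p by simp
    qed
    have K: "(\<Sum>x\<in>{x\<in>X. p x \<noteq> 0}. p x * ln (t x)) = (\<Sum>x\<in>X. if p x = 0 then 0 else p x * ln (p x / q x))"
    proof -
      have "(\<Sum>x\<in>{x\<in>X. p x \<noteq> 0}. p x * ln (t x)) = (\<Sum>x\<in>X. if p x \<noteq> 0 then p x * ln (t x) else 0)"
        by (rule sum.inter_filter[OF X])
      also have "... = (\<Sum>x\<in>X. if p x = 0 then 0 else p x * ln (p x / q x))"
        by (rule sum.cong[OF refl]) (simp add: t_def)
      finally show ?thesis .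
    qed
    have "KL X p q = ereal (\<Sum>x\<in>X. if p x = 0 then 0 else p x * ln (p x / q x))"
      using False by (simp add: KL_def)
    also have "... \<le> KL UNIV (meas P \<rho>) (meas P \<sigma>)"
      using le K T by (simp add: p_def[symmetric] q_def[symmetric])
    also have "... \<le> proj_measured_rel_entropy \<rho> \<sigma>" by (rule upper[OF fam])
    finally show ?thesis by (simp add: XM p_def[abs_def] q_def[abs_def])
  qed
qed

theorem theorem2:
  fixes \<rho> \<sigma> :: "complex^'n^'n"
  assumes "density_operator \<rho>" and "psd \<sigma>"
  shows "proj_measured_rel_entropy \<rho> \<sigma> = measured_rel_entropy \<rho> \<sigma>"
  using DP_le_DM DM_le_DP[OF assms] by (rule antisym)


end
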